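(* Let $L, w \in \mathbb{N}$ with $w \ge 1$ and $L \ge w-1$, let $m,n\in\mathbb{N}$, and let $R(x)=\sum_{d=1}^{d_{\max}} R_d x^d$ with $R_d\ge 0$ and $R(1)=1$. In the $(\lambda(x),R(x),L,w)$ spatially coupled LDGM ensemble described below (whose underlying ensemble has $n$ generator nodes and $m$ information bits), the design rate equals $$ r=\frac{mL}{\,n (L - w + 1) + 2n\sum_{i=1}^{w-1} \bigl(1 - R(\tfrac{i}{w})\bigr)}. $$
   Context: Spatially coupled LDGM ensemble: information bits are placed at positions $0,1,\dots,L-1$, with $m$ information bits at each position. Generator nodes are placed at positions $0,1,\dots,L+w-2$, with $n$ generator nodes at each position. Each generator node at position $j$ independently chooses a degree $d$ with probability $R_d$, and each of its $d$ edges independently chooses a position uniformly from $\{j-w+1,\dots,j\}$ and then an information bit (of the $mw$ bits in that window) at that position. Edges whose chosen position lies outside $[0,L-1]$ are omitted (equivalently, they connect to known bits of value $0$). The information-node degree distribution $\lambda(x)$ plays no role in this claim. The design rate is defined as the total number $mL$ of information bits divided by the expected number of generator nodes that are connected to at least one information bit at a position in $[0,L-1]$. *)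

theory Defs
  imports "HOL-Probability.Probability"
begin

definition Rpoly :: "(nat \<Rightarrow> real) \<Rightarrow> nat \<Rightarrow> real \<Rightarrow> real" where
  "Rpoly R dmax x = (\<Sum>d = 1..dmax. R d * x ^ d)"

definition degree_pmf :: "(nat \<Rightarrow> real) \<Rightarrow> nat \<Rightarrow> nat pmf" where
  "degree_pmf R dmax = embed_pmf (\<lambda>d. if d \<in> {1..dmax} then R d else 0)"

text \<open>The outcome is (d, f) where f k is the position chosen by edge k < d.
  (The choice of the information bit inside a position does not affect whether
  the edge lands in [0, L-1], hence it is not modelled.)\<close>
definition gen_pmf :: "(nat \<Rightarrow> real) \<Rightarrow> nat \<Rightarrow> nat \<Rightarrow> int \<Rightarrow> (nat \<times> (nat \<Rightarrow> int)) pmf" where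
  "gen_pmf R dmax w j =
     bind_pmf (degree_pmf R dmax)
       (\<lambda>d. map_pmf (\<lambda>f. (d, f))
              (Pi_pmf {..<d} 0 (\<lambda>_. pmf_of_set {j - int w + 1 .. j})))"

definition connected_event :: "nat \<Rightarrow> (nat \<times> (nat \<Rightarrow> int)) set" where
  "connected_event L = {(d, f). \<exists>k<d. f k \<in> {0 .. int L - 1}}"

definition expected_connected :: "nat \<Rightarrow> (nat \<Rightarrow> real) \<Rightarrow> nat \<Rightarrow> nat \<Rightarrow> nat \<Rightarrow> real" where
  "expected_connected n R dmax L w =
     (\<Sum>j \<in> {0 .. int L + int w - 2}.
        real n * measure_pmf.prob (gen_pmf R dmax w j) (connected_event L))"

definition design_rate :: "nat \<Rightarrow> nat \<Rightarrow> (nat \<Rightarrow> real) \<Rightarrow> nat \<Rightarrow> nat \<Rightarrow> nat \<Rightarrow> real" where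
  "design_rate m n R dmax L w = real (m * L) / expected_connected n R dmax L w"

end

theory Submission imports Defs begin

lemma measure_bind_finite:
  assumes "finite (set_pmf M)"
  shows "measure_pmf.prob (bind_pmf M N) X = (\<Sum>x\<in>set_pmf M. pmf M x * measure_pmf.prob (N x) X)"
proof -
  have "emeasure (measure_pmf (bind_pmf M N)) X = (\<Sum>x\<in>set_pmf M. ennreal (measure_pmf.prob (N x) X) * ennreal (pmf M x))"
    unfolding emeasure_bind_pmf
    by (subst nn_integral_measure_pmf_finite[OF assms]) (auto simp: measure_pmf.emeasure_eq_measure)
  also have "\<dots> = ennreal (\<Sum>x\<in>set_pmf M. pmf M x * measure_pmf.prob (N x) X)"
    by (subst sum_ennreal[symmetric]) (auto simp: ennreal_mult mult.commute intro!: sum.cong)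
  finally have "ennreal (measure_pmf.prob (bind_pmf M N) X) = ennreal (\<Sum>x\<in>set_pmf M. pmf M x * measure_pmf.prob (N x) X)"
    by (simp add: measure_pmf.emeasure_eq_measure)
  thus ?thesis by (subst (asm) ennreal_inj) (auto intro!: sum_nonneg)
qed

lemma Rpoly_sum: "Rpoly R dmax 1 = (\<Sum>d=1..dmax. R d)" by (simp add: Rpoly_def)

lemma pmf_degree:
  assumes "\<And>d. R d \<ge> 0" "Rpoly R dmax 1 = 1"
  shows "pmf (degree_pmf R dmax) d = (if d \<in> {1..dmax} then R d else 0)"
  unfolding degree_pmf_def
proof (rule pmf_embed_pmf)
  show "\<And>x. 0 \<le> (if x \<in> {1..dmax} then R x else 0)" using assms by auto
  have "(\<integral>\<^sup>+x. ennreal (if x \<in> {1..dmax} then R x else 0) \<partial>count_space UNIV)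
     = (\<integral>\<^sup>+x. ennreal (R x) \<partial>count_space {1..dmax})"
    by (subst nn_integral_count_space_indicator) (auto intro!: nn_integral_cong split: split_indicator)
  also have "\<dots> = ennreal (\<Sum>d=1..dmax. R d)"
    using assms by (simp add: nn_integral_count_space_finite sum_ennreal)
  finally show "(\<integral>\<^sup>+x. ennreal (if x \<in> {1..dmax} then R x else 0) \<partial>count_space UNIV) = 1"
    using assms Rpoly_sum by simp
qed

lemma prob_inner:
  assumes "w \<ge> 1"
  shows "measure_pmf.prob (map_pmf (\<lambda>f. (d, f)) (Pi_pmf {..<d} 0 (\<lambda>_. pmf_of_set {j - int w + 1 .. j})))
           (connected_event L)
       = 1 - (1 - real (card ({j - int w + 1 .. j} \<inter> {0 .. int L - 1})) / real w) ^ d"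
proof -
  define S where "S = {0 .. int L - 1}"
  define U where "U = pmf_of_set {j - int w + 1 .. j}"
  have W: "{j - int w + 1 .. j} \<noteq> {}" "finite {j - int w + 1 .. j}" "card {j - int w + 1 .. j} = w"
    using assms by auto
  have pre: "(\<lambda>f. (d, f)) -` connected_event L = - Pi {..<d} (\<lambda>_. - S)"
    by (auto simp: connected_event_def S_def Pi_def)
  have US: "measure_pmf.prob U (- S) = 1 - real (card ({j - int w + 1 .. j} \<inter> S)) / real w"
  proof -
    have "measure_pmf.prob U (- S) = 1 - measure_pmf.prob U S"
      using measure_pmf.prob_compl[of S U] by (simp add: Compl_eq_Diff_UNIV)
    thus ?thesis using W unfolding U_def by (simp add: measure_pmf_of_set Int_commute)
  qed
  have "measure_pmf.prob (map_pmf (\<lambda>f. (d, f)) (Pi_pmf {..<d} 0 (\<lambda>_. U))) (connected_event L)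
      = 1 - measure_pmf.prob (Pi_pmf {..<d} 0 (\<lambda>_. U)) (Pi {..<d} (\<lambda>_. - S))"
    using measure_pmf.prob_compl[of "Pi {..<d} (\<lambda>_. - S)" "Pi_pmf {..<d} 0 (\<lambda>_. U)"]
    by (simp add: pre Compl_eq_Diff_UNIV)
  also have "\<dots> = 1 - (1 - real (card ({j - int w + 1 .. j} \<inter> S)) / real w) ^ d"
    by (simp add: measure_Pi_pmf_Pi US)
  finally show ?thesis by (simp add: U_def S_def)
qed

lemma prob_gen:
  assumes "w \<ge> 1" "\<And>d. R d \<ge> 0" "Rpoly R dmax 1 = 1"
  shows "measure_pmf.prob (gen_pmf R dmax w j) (connected_event L)
       = 1 - Rpoly R dmax (1 - real (card ({j - int w + 1 .. j} \<inter> {0 .. int L - 1})) / real w)"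
proof -
  define x where "x = 1 - real (card ({j - int w + 1 .. j} \<inter> {0 .. int L - 1})) / real w"
  define D where "D = degree_pmf R dmax"
  have pD: "\<And>d. pmf D d = (if d \<in> {1..dmax} then R d else 0)"
    unfolding D_def using pmf_degree[OF assms(2,3)] .
  have sD: "set_pmf D \<subseteq> {1..dmax}" using pD by (auto simp: set_pmf_eq split: if_splits)
  hence fD: "finite (set_pmf D)" using finite_subset by blast
  have "measure_pmf.prob (gen_pmf R dmax w j) (connected_event L)
      = (\<Sum>d\<in>set_pmf D. pmf D d * (1 - x ^ d))"
    unfolding gen_pmf_def D_def[symmetric]
    unfolding measure_bind_finite[OF fD] prob_inner[OF assms(1)] x_def ..
  also have "\<dots> = (\<Sum>d\<in>{1..dmax}. pmf D d * (1 - x ^ d))"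
    by (rule sum.mono_neutral_left) (use sD in \<open>auto simp: set_pmf_eq\<close>)
  also have "\<dots> = (\<Sum>d\<in>{1..dmax}. R d) - Rpoly R dmax x"
    by (simp add: pD Rpoly_def algebra_simps sum_subtractf)
  also have "\<dots> = 1 - Rpoly R dmax x" using assms(3) Rpoly_sum by simp
  finally show ?thesis by (simp add: x_def)
qed

lemma Rpoly_0: "Rpoly R dmax 0 = 0" by (simp add: Rpoly_def)

lemma main_sum:
  fixes R :: "nat \<Rightarrow> real" and dmax w L :: nat
  assumes "w \<ge> 1" "L \<ge> w - 1"
  defines "g \<equiv> \<lambda>j::int. 1 - Rpoly R dmax (1 - real (card ({j - int w + 1 .. j} \<inter> {0 .. int L - 1})) / real w)"
  shows "(\<Sum>j\<in>{0 .. int L + int w - 2}. g j) = (real L - real w + 1)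
        + 2 * (\<Sum>i = 1..w - 1. (1 - Rpoly R dmax (real i / real w)))"
proof -
  have Lw: "int L \<ge> int w - 1" using assms(1,2) by linarith
  define F where "F = (\<lambda>i::nat. 1 - Rpoly R dmax (real i / real w))"
  have split: "{0 .. int L + int w - 2} = {0 .. int w - 2} \<union> ({int w - 1 .. int L - 1} \<union> {int L .. int L + int w - 2})"
    using assms by auto
  have A: "(\<Sum>j\<in>{0 .. int w - 2}. g j) = (\<Sum>i = 1..w - 1. F i)"
  proof (rule sum.reindex_bij_witness[where i="\<lambda>i. int w - 1 - int i" and j="\<lambda>j. nat (int w - 1 - j)"])
    fix j assume j: "j \<in> {0 .. int w - 2}"
    have c: "card ({j - int w + 1 .. j} \<inter> {0 .. int L - 1}) = nat (j + 1)"
      using j assms(1) Lw by (simp add: min_def max_def; arith)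
    have "1 - real (nat (j + 1)) / real w = real (nat (int w - 1 - j)) / real w"
      using j assms(1) Lw by (simp add: field_simps of_nat_diff)
    thus "F (nat (int w - 1 - j)) = g j" unfolding F_def g_def c by simp
  qed (use assms in auto)
  have C: "(\<Sum>j\<in>{int L .. int L + int w - 2}. g j) = (\<Sum>i = 1..w - 1. F i)"
  proof (rule sum.reindex_bij_witness[where i="\<lambda>i. int L - 1 + int i" and j="\<lambda>j. nat (j - int L + 1)"])
    fix j assume j: "j \<in> {int L .. int L + int w - 2}"
    have c: "card ({j - int w + 1 .. j} \<inter> {0 .. int L - 1}) = nat (int L + int w - 1 - j)"
      using j assms(1) Lw by (simp add: min_def max_def; arith)
    have "1 - real (nat (int L + int w - 1 - j)) / real w = real (nat (j - int L + 1)) / real w"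
      using j assms(1) Lw by (simp add: field_simps of_nat_diff)
    thus "F (nat (j - int L + 1)) = g j" unfolding F_def g_def c by simp
  qed (use assms in auto)
  have B: "(\<Sum>j\<in>{int w - 1 .. int L - 1}. g j) = real L - real w + 1"
  proof -
    have "(\<Sum>j\<in>{int w - 1 .. int L - 1}. g j) = (\<Sum>j\<in>{int w - 1 .. int L - 1}. 1)"
    proof (rule sum.cong[OF refl])
      fix j assume j: "j \<in> {int w - 1 .. int L - 1}"
      have c: "card ({j - int w + 1 .. j} \<inter> {0 .. int L - 1}) = w"
        using j assms(1) Lw by (simp add: min_def max_def; arith)
      show "g j = 1" unfolding g_def c using assms by (simp add: Rpoly_0)
    qed
    also have "\<dots> = real L - real w + 1" using assms by simp
    finally show ?thesis .
  qed
  have "sum g ({0..int w - 2} \<union> ({int w - 1..int L - 1} \<union> {int L..int L + int w - 2}))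
      = sum g {0..int w - 2} + (sum g {int w - 1..int L - 1} + sum g {int L..int L + int w - 2})"
    by (subst sum.union_disjoint; (subst sum.union_disjoint)?) (use Lw in auto)
  thus ?thesis unfolding split A B C F_def by simp
qed

theorem lemma1:
  fixes L w m n dmax :: nat and R :: "nat \<Rightarrow> real"
  assumes "w \<ge> 1" and "L \<ge> w - 1"
    and "\<And>d. R d \<ge> 0"
    and "Rpoly R dmax 1 = 1"
  shows "design_rate m n R dmax L w =
    real (m * L) / (real n * (real L - real w + 1)
       + 2 * real n * (\<Sum>i = 1..w - 1. (1 - Rpoly R dmax (real i / real w))))"
proof -
  have "expected_connected n R dmax L w = real n * (\<Sum>j\<in>{0 .. int L + int w - 2}.
      1 - Rpoly R dmax (1 - real (card ({j - int w + 1 .. j} \<inter> {0 .. int L - 1})) / real w))"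
    unfolding expected_connected_def sum_distrib_left
    by (rule sum.cong[OF refl]) (simp only: prob_gen[OF assms(1,3,4)])
  also have "\<dots> = real n * (real L - real w + 1)
       + 2 * real n * (\<Sum>i = 1..w - 1. (1 - Rpoly R dmax (real i / real w)))"
    unfolding main_sum[OF assms(1,2)] by (simp add: algebra_simps)
  finally show ?thesis unfolding design_rate_def by simp
qed

end
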